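(* Let $(S,\sqcup,\cap)$ be an ado-semilattice and $a,b,d\in S$. If $a$ and $b$ have an upper bound in $(S,\leq)$ and $d\lesssim a$ and $d\lesssim b$, then $d\lesssim a\cap b$.
   Context: An o-semilattice is an algebra $(L,\cap,\sqcup)$ such that $(L,\cap)$ is a semilattice and, with $x\leq y$ iff $x=x\cap y$, for all $x,y,z$: (i) $x\leq x\sqcup y$; (ii) $(x\cap y)\sqcup(y\cap z)\leq y$; (iii) $x\sqcup y\leq x\sqcup(y\cap(x\sqcup y))$; (iv) $x\cap z\leq(x\cap y)\sqcup z$. It is distributive if $(a\cap d)\sqcup((b\cap d)\cap(c\cap d))=((a\cap d)\sqcup(b\cap d))\cap((a\cap d)\sqcup(c\cap d))$ for all $a,b,c,d$. An ado-semilattice is a distributive o-semilattice in which $\sqcup$ is associative. Here $\leq$ is the semilattice order ($x\leq y$ iff $x=x\cap y$) and $x\lesssim y$ means $y\sqcup x=y$. *)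

theory Defs
  imports Main
begin

definition sl_le :: "('a \<Rightarrow> 'a \<Rightarrow> 'a) \<Rightarrow> 'a \<Rightarrow> 'a \<Rightarrow> bool" where
  "sl_le m x y \<longleftrightarrow> x = m x y"

definition lesssim :: "('a \<Rightarrow> 'a \<Rightarrow> 'a) \<Rightarrow> 'a \<Rightarrow> 'a \<Rightarrow> bool" where
  "lesssim j x y \<longleftrightarrow> j y x = y"

definition semilattice_op :: "('a \<Rightarrow> 'a \<Rightarrow> 'a) \<Rightarrow> bool" where
  "semilattice_op m \<longleftrightarrow>
     (\<forall>x y z. m (m x y) z = m x (m y z)) \<and>
     (\<forall>x y. m x y = m y x) \<and>
     (\<forall>x. m x x = x)"

definition o_semilattice :: "('a \<Rightarrow> 'a \<Rightarrow> 'a) \<Rightarrow> ('a \<Rightarrow> 'a \<Rightarrow> 'a) \<Rightarrow> bool" where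
  "o_semilattice m j \<longleftrightarrow> semilattice_op m \<and>
     (\<forall>x y. sl_le m x (j x y)) \<and>
     (\<forall>x y z. sl_le m (j (m x y) (m y z)) y) \<and>
     (\<forall>x y. sl_le m (j x y) (j x (m y (j x y)))) \<and>
     (\<forall>x y z. sl_le m (m x z) (j (m x y) z))"

definition distributive_os :: "('a \<Rightarrow> 'a \<Rightarrow> 'a) \<Rightarrow> ('a \<Rightarrow> 'a \<Rightarrow> 'a) \<Rightarrow> bool" where
  "distributive_os m j \<longleftrightarrow> o_semilattice m j \<and>
     (\<forall>a b c d. j (m a d) (m (m b d) (m c d)) = m (j (m a d) (m b d)) (j (m a d) (m c d)))"

definition ado_semilattice :: "('a \<Rightarrow> 'a \<Rightarrow> 'a) \<Rightarrow> ('a \<Rightarrow> 'a \<Rightarrow> 'a) \<Rightarrow> bool" where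
  "ado_semilattice m j \<longleftrightarrow> distributive_os m j \<and> (\<forall>x y z. j (j x y) z = j x (j y z))"

end

theory Submission
  imports Defs
begin

theorem lemma3p5:
  fixes meet join :: "'a \<Rightarrow> 'a \<Rightarrow> 'a" and a b d :: 'a
  assumes "ado_semilattice meet join"
    and "\<exists>u. sl_le meet a u \<and> sl_le meet b u"
    and "lesssim join d a" and "lesssim join d b"
  shows "lesssim join d (meet a b)"
proof -
  define m where "m = meet"
  define j where "j = join"
  have H: "ado_semilattice m j" using assms(1) by (simp add: m_def j_def)
  have As_: "\<forall>x y z. m (m x y) z = m x (m y z)"
    using H unfolding ado_semilattice_def distributive_os_def o_semilattice_def
      semilattice_op_def sl_le_def by (elim conjE) assumption
  note As = As_[rule_format]
  have C_: "\<forall>x y. m x y = m y x"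
    using H unfolding ado_semilattice_def distributive_os_def o_semilattice_def
      semilattice_op_def sl_le_def by (elim conjE) assumption
  note C = C_[rule_format]
  have I_: "\<forall>x. m x x = x"
    using H unfolding ado_semilattice_def distributive_os_def o_semilattice_def
      semilattice_op_def sl_le_def by (elim conjE) assumption
  note I = I_[rule_format]
  have o1_: "\<forall>x y. x = m x (j x y)"
    using H unfolding ado_semilattice_def distributive_os_def o_semilattice_def
      semilattice_op_def sl_le_def by (elim conjE) assumption
  note o1 = o1_[rule_format, symmetric]
  have o2_: "\<forall>x y z. j (m x y) (m y z) = m (j (m x y) (m y z)) y"
    using H unfolding ado_semilattice_def distributive_os_def o_semilattice_def
      semilattice_op_def sl_le_def by (elim conjE) assumption
  note o2 = o2_[rule_format, symmetric]
  have o3_: "\<forall>x y. j x y = m (j x y) (j x (m y (j x y)))"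
    using H unfolding ado_semilattice_def distributive_os_def o_semilattice_def
      semilattice_op_def sl_le_def by (elim conjE) assumption
  note o3 = o3_[rule_format, symmetric]
  have o4_: "\<forall>x y z. m x z = m (m x z) (j (m x y) z)"
    using H unfolding ado_semilattice_def distributive_os_def o_semilattice_def
      semilattice_op_def sl_le_def by (elim conjE) assumption
  note o4 = o4_[rule_format, symmetric]
  have D_: "\<forall>a b c d. j (m a d) (m (m b d) (m c d)) = m (j (m a d) (m b d)) (j (m a d) (m c d))"
    using H unfolding ado_semilattice_def distributive_os_def o_semilattice_def
      semilattice_op_def sl_le_def by (elim conjE) assumption
  note D = D_[rule_format]
  have JA_: "\<forall>x y z. j (j x y) z = j x (j y z)"
    using H unfolding ado_semilattice_def distributive_os_def o_semilattice_def
      semilattice_op_def sl_le_def by (elim conjE) assumption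
  note JA = JA_[rule_format]

  obtain u where hua: "m a u = a" and hub: "m b u = b"
    using assms(2) unfolding sl_le_def m_def by (metis (no_types))
  have da: "j a d = a" and db: "j b d = b"
    using assms(3,4) by (auto simp: lesssim_def j_def)
  have trans: "m x z = x" if "m x y = x" "m y z = y" for x y z
  proof -
    have "m x z = m (m x y) z" using that(1) by simp
    also have "\<dots> = m x (m y z)" by (rule As)
    also have "\<dots> = x" using that by simp
    finally show ?thesis .
  qed
  have glb: "m x (m y z) = x" if "m x y = x" "m x z = x" for x y z
  proof -
    have "m x (m y z) = m (m x y) z" by (simp add: As)
    also have "\<dots> = x" using that by simp
    finally show ?thesis .
  qed
  have lb1: "m (m x y) x = m x y" for x y
    by (simp add: As C[of y x]) (simp add: As[symmetric] I)
  have lb2: "m (m x y) y = m x y" for x y by (simp add: As I)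
  have ub: "m (j x y) s = j x y" if "m x s = x" "m y s = y" for x y s
  proof -
    have "m s y = y" using that(2) C[of s y] by simp
    thus ?thesis using o2[of x s y] that(1) by simp
  qed
  have lbj: "m y (j x y) = y" if "m x s = x" "m y s = y" for x y s
  proof -
    have "m s x = x" "m s y = y" using that C[of s] by simp_all
    thus ?thesis using o4[of s y x] by simp
  qed
  have P2: "m x y = x" if "m x s = x" "m y s = y" "j y x = y" for x y s
  proof -
    have "m s x = x" "m s y = y" using that C[of s] by simp_all
    thus ?thesis using o4[of s x y] that(3) by simp
  qed
  have L1: "j y x = y" if "m x y = x" for x y
  proof -
    have "m (j y x) y = j y x" using ub[of y y x] I that by simp
    moreover have "m y (j y x) = y" by (rule o1)
    ultimately show ?thesis using C[of y "j y x"] by simp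
  qed
  have L2: "j x y = y" if "m x y = x" for x y
  proof -
    have "m (j x y) y = j x y" using ub[of x y y] I that by simp
    moreover have "m y (j x y) = y" using lbj[of x y y] I that by simp
    ultimately show ?thesis using C[of y "j x y"] by simp
  qed
  define w where "w = j a b"
  define c where "c = m a b"
  define t where "t = j c d"
  have aw: "m a w = a" unfolding w_def by (rule o1)
  have bw: "m b w = b" unfolding w_def using lbj[of a u b] hua hub by simp
  have ca: "m c a = c" unfolding c_def by (rule lb1)
  have cb: "m c b = c" unfolding c_def by (rule lb2)
  have ta: "j a t = a" unfolding t_def using JA[of a c d] L1[OF ca] da by simp
  have tb: "j b t = b" unfolding t_def using JA[of b c d] L1[OF cb] db by simp
  define r where "r = m w (j t w)"
  have rw: "m r w = r" unfolding r_def by (rule lb1)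
  have atw: "j a (j t w) = w" using JA[of a t w] ta L2[OF aw] by simp
  have btw: "j b (j t w) = w" using JA[of b t w] tb L2[OF bw] by simp
  have w1: "m w (j a r) = w" using o3[of a "j t w"] atw C[of "j t w" w] unfolding r_def by simp
  have w2: "m w (j b r) = w" using o3[of b "j t w"] btw C[of "j t w" w] unfolding r_def by simp
  have ar: "j a r = w" using w1 ub[OF aw rw] C[of w "j a r"] by simp
  have br: "j b r = w" using w2 ub[OF bw rw] C[of w "j b r"] by simp
  have comm: "j x y = j y x" if "m x s = x" "m y s = y" for x y s
  proof -
    have "m (j x y) (j y x) = j x y"
      using ub[of x "j y x" y] o1[of y x] lbj[OF that(2) that(1)] by simp
    moreover have "m (j y x) (j x y) = j y x"
      using ub[of y "j x y" x] o1[of x y] lbj[OF that] by simp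
    ultimately show ?thesis using C[of "j x y" "j y x"] by simp
  qed
  have ra: "j r a = w" using comm[OF rw aw] ar by simp
  have rb: "j r b = w" using comm[OF rw bw] br by simp
  have "j r c = w"
    using D[of r w a b] rw aw bw ra rb I[of w] unfolding c_def by simp
  moreover have cr: "m c r = c"
  proof -
    have cw: "m c w = c" using trans[OF ca aw] .
    have ct: "m c t = c" unfolding t_def by (rule o1)
    have tt: "m t (j t w) = t" by (rule o1)
    show ?thesis unfolding r_def using glb[OF cw trans[OF ct tt]] .
  qed
  ultimately have "r = w" using L1[OF cr] by simp
  hence wtw: "m w (j t w) = w" unfolding r_def by simp
  have ts: "m t (j t w) = t" by (rule o1)
  have as: "m a (j t w) = a" using trans[OF aw wtw] .
  have bs: "m b (j t w) = b" using trans[OF bw wtw] .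
  have "m t a = t" using P2[OF ts as ta] .
  moreover have "m t b = t" using P2[OF ts bs tb] .
  ultimately have "m t c = t" unfolding c_def using glb by blast
  moreover have "m c t = c" unfolding t_def by (rule o1)
  ultimately have "t = c" using C[of t c] by simp
  thus ?thesis unfolding lesssim_def t_def c_def m_def j_def by simp
qed

end
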